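(* Let $\mu^\star_0,\mu^\star_1$ be any probability measures on $\mathbb{R}^d$ with finite second moment. Then any coupling $(Y_0,Y_1)$ of $\mu^\star_0$ and $\mu^\star_1$ induces an optimal solution $(Y_t)_{t\in[0,1]}$ of the P-spline problem with data $\mu^\star_0,\mu^\star_1$ at times $0,1$, whose values at times $0$ and $1$ are $Y_0$ and $Y_1$.
   Context: The P-spline problem with data $\mu^\star_{t_0},\dots,\mu^\star_{t_N}$ at times $0=t_0<\dots<t_N=1$ is $\inf_{(Y_t)}\int_0^1\mathbb E[\|\ddot Y_t\|^2]\,dt$ over stochastic processes $(Y_t)_{t\in[0,1]}$ in $\mathbb{R}^d$ with twice differentiable paths and $Y_{t_i}\sim\mu^\star_{t_i}$ for all $i$. *)

theory Defs
  imports "HOL-Probability.Probability"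
begin

definition twice_diff_paths :: "(real \<Rightarrow> 'c \<Rightarrow> 'b::real_normed_vector) \<Rightarrow> 'c measure \<Rightarrow> bool" where
  "twice_diff_paths Y M \<longleftrightarrow>
     (\<forall>\<omega>\<in>space M. \<exists>f' f''. \<forall>t\<in>{0..1}.
        ((\<lambda>s. Y s \<omega>) has_vector_derivative f' t) (at t within {0..1}) \<and>
        (f' has_vector_derivative f'' t) (at t within {0..1}))"

definition ddot :: "(real \<Rightarrow> 'c \<Rightarrow> 'b::real_normed_vector) \<Rightarrow> 'c \<Rightarrow> real \<Rightarrow> 'b" where
  "ddot Y \<omega> t = vector_derivative
      (\<lambda>s. vector_derivative (\<lambda>r. Y r \<omega>) (at s within {0..1})) (at t within {0..1})"

definition pspline_cost :: "'c measure \<Rightarrow> (real \<Rightarrow> 'c \<Rightarrow> 'b::real_normed_vector) \<Rightarrow> ennreal" where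
  "pspline_cost M Y =
     (\<integral>\<^sup>+ t. indicator {0..1::real} t * (\<integral>\<^sup>+ \<omega>. ennreal ((norm (ddot Y \<omega> t))\<^sup>2) \<partial>M) \<partial>lborel)"

definition pspline_feasible ::
  "'b::euclidean_space measure \<Rightarrow> 'b measure \<Rightarrow> 'c measure \<Rightarrow> (real \<Rightarrow> 'c \<Rightarrow> 'b) \<Rightarrow> bool" where
  "pspline_feasible \<mu>0 \<mu>1 M Y \<longleftrightarrow>
     prob_space M \<and> (\<forall>t\<in>{0..1}. Y t \<in> borel_measurable M) \<and> twice_diff_paths Y M \<and>
     distr M borel (Y 0) = \<mu>0 \<and> distr M borel (Y 1) = \<mu>1"

end

theory Submission
  imports Defs
begin

lemma inner_vd:
  fixes c d :: "'b::euclidean_space"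
  assumes "s \<in> {0..1::real}"
  shows "vector_derivative (\<lambda>r. c + r *\<^sub>R d) (at s within {0..1}) = d"
proof -
  have "((\<lambda>r. c + r *\<^sub>R d) has_vector_derivative d) (at s within {0..1})"
    by (auto intro!: derivative_eq_intros)
  then show ?thesis using assms by (intro vector_derivative_within_closed_interval[of 0 1]) auto
qed

lemma ddot_lin:
  fixes c d :: "'b::euclidean_space"
  assumes "t \<in> {0..1::real}"
  shows "vector_derivative (\<lambda>s. vector_derivative (\<lambda>r. c + r *\<^sub>R d) (at s within {0..1}))
            (at t within {0..1}) = 0"
proof -
  have "((\<lambda>s. d) has_vector_derivative 0) (at t within {0..1})" by simp
  then have "((\<lambda>s. vector_derivative (\<lambda>r. c + r *\<^sub>R d) (at s within {0..1}))
      has_vector_derivative 0) (at t within {0..1})"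
    by (rule has_vector_derivative_transform_within[where d=1]) (use assms in \<open>auto simp: inner_vd\<close>)
  then show ?thesis using assms by (intro vector_derivative_within_closed_interval[of 0 1]) auto
qed

theorem proposition4:
  fixes \<mu>0 \<mu>1 :: "'b::euclidean_space measure"
    and M :: "'a measure"
    and Y0 Y1 :: "'a \<Rightarrow> 'b"
  assumes "prob_space \<mu>0" "sets \<mu>0 = sets borel" "(\<integral>\<^sup>+ x. ennreal ((norm x)\<^sup>2) \<partial>\<mu>0) < \<infinity>"
    and "prob_space \<mu>1" "sets \<mu>1 = sets borel" "(\<integral>\<^sup>+ x. ennreal ((norm x)\<^sup>2) \<partial>\<mu>1) < \<infinity>"
    and "prob_space M"
    and "Y0 \<in> borel_measurable M" "Y1 \<in> borel_measurable M"
    and "distr M borel Y0 = \<mu>0" "distr M borel Y1 = \<mu>1"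
  shows "\<exists>Y. pspline_feasible \<mu>0 \<mu>1 M Y \<and>
             (\<forall>\<omega>\<in>space M. Y 0 \<omega> = Y0 \<omega> \<and> Y 1 \<omega> = Y1 \<omega>) \<and>
             (\<forall>(M' :: 'c measure) Z. pspline_feasible \<mu>0 \<mu>1 M' Z \<longrightarrow>
                 pspline_cost M Y \<le> pspline_cost M' Z)"
proof -
  define Y where "Y = (\<lambda>(t::real) \<omega>. Y0 \<omega> + t *\<^sub>R (Y1 \<omega> - Y0 \<omega>))"
  have Y0: "Y 0 = Y0" and Y1: "Y 1 = Y1" by (auto simp: Y_def)
  have meas: "\<forall>t\<in>{0..1}. Y t \<in> borel_measurable M"
    using assms(8,9) unfolding Y_def by auto
  have tw: "twice_diff_paths Y M"
    unfolding twice_diff_paths_def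
  proof
    fix \<omega> assume "\<omega> \<in> space M"
    show "\<exists>f' f''. \<forall>t\<in>{0..1}.
        ((\<lambda>s. Y s \<omega>) has_vector_derivative f' t) (at t within {0..1}) \<and>
        (f' has_vector_derivative f'' t) (at t within {0..1})"
      by (rule exI[of _ "\<lambda>t. Y1 \<omega> - Y0 \<omega>"], rule exI[of _ "\<lambda>t. 0"])
        (auto simp: Y_def intro!: derivative_eq_intros)
  qed
  have cost: "pspline_cost M Y = 0"
  proof -
    have "\<And>t. indicator {0..1::real} t * (\<integral>\<^sup>+ \<omega>. ennreal ((norm (ddot Y \<omega> t))\<^sup>2) \<partial>M) = 0"
    proof -
      fix t :: real
      show "indicator {0..1::real} t * (\<integral>\<^sup>+ \<omega>. ennreal ((norm (ddot Y \<omega> t))\<^sup>2) \<partial>M) = 0"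
      proof (cases "t \<in> {0..1}")
        case True
        then have "\<And>\<omega>. ddot Y \<omega> t = 0"
          unfolding ddot_def Y_def using ddot_lin by blast
        then show ?thesis by simp
      next
        case False then show ?thesis by simp
      qed
    qed
    then have "(\<lambda>t. indicator {0..1::real} t * (\<integral>\<^sup>+ \<omega>. ennreal ((norm (ddot Y \<omega> t))\<^sup>2) \<partial>M)) = (\<lambda>t. 0)"
      by (rule ext)
    then show ?thesis unfolding pspline_cost_def by simp
  qed
  show ?thesis
    apply (rule exI[of _ Y])
    using meas tw assms(7,10,11) cost by (auto simp: pspline_feasible_def Y0 Y1)
qed

end
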